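(* Let $H$ be a subgroup of a direct product $H_1\times\dots\times H_r$ of finite groups, and let $g\in H$ be an involution. For $i=1,\dots,r$ let $L_i$ be the projection of $H$ to $H_i\times H_{i+1}\times\dots\times H_r$ (so $L_1=H$), and let $g_i$ be the image of $g$ in $L_i$. For $i=1,\dots,r-1$ let $\psi_i:L_i\to L_{i+1}$ be the canonical projection and $T_i=\ker\psi_i$; set $T_r=L_r$. Suppose that there is $k\leq r$ such that $|T_i|$ is odd for all $i<k$ and $|T_k|$ is even; if $k<r$ suppose further that $g_{k+1}=1$. Let $P$ be a Sylow $2$-subgroup of $T_k$. Then $$|H:C_H(g)|=\left(\prod_{i=1}^{k}|T_i:C_{T_i}(g_i)|\right)\frac{|(g_k)^{L_k}\cap P|}{|(g_k)^{T_k}\cap P|}.$$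
   Context: $x^K$ denotes the set of $K$-conjugates of $x$; $C_{T_i}(g_i)$ is the centralizer in the normal subgroup $T_i\trianglelefteq L_i$ of $g_i\in L_i$. *)

theory Defs
  imports "HOL-Algebra.Algebra"
begin

text \<open>Elements of the direct product H_1 x ... x H_r are extensional functions on {1..r}.
  The product of the factors H_i, ..., H_r is product_group {i..r} Hs.\<close>

definition proj_to :: "nat \<Rightarrow> nat \<Rightarrow> (nat \<Rightarrow> 'a) \<Rightarrow> (nat \<Rightarrow> 'a)" where
  "proj_to i r x = restrict x {i..r}"

definition Lproj :: "(nat \<Rightarrow> 'a) set \<Rightarrow> nat \<Rightarrow> nat \<Rightarrow> (nat \<Rightarrow> 'a) set" where
  "Lproj H r i = proj_to i r ` H"

definition Tker :: "(nat \<Rightarrow> ('a,'b) monoid_scheme) \<Rightarrow> (nat \<Rightarrow> 'a) set \<Rightarrow> nat \<Rightarrow> nat \<Rightarrow> (nat \<Rightarrow> 'a) set" where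
  "Tker Hs H r i = (if i < r then
      {x \<in> Lproj H r i. proj_to (i+1) r x = \<one>\<^bsub>product_group {i+1..r} Hs\<^esub>}
    else Lproj H r i)"

definition centr :: "('c,'d) monoid_scheme \<Rightarrow> 'c set \<Rightarrow> 'c \<Rightarrow> 'c set" where
  "centr G K g = {x \<in> K. x \<otimes>\<^bsub>G\<^esub> g = g \<otimes>\<^bsub>G\<^esub> x}"

definition conjs :: "('c,'d) monoid_scheme \<Rightarrow> 'c set \<Rightarrow> 'c \<Rightarrow> 'c set" where
  "conjs G K g = {x \<otimes>\<^bsub>G\<^esub> g \<otimes>\<^bsub>G\<^esub> inv\<^bsub>G\<^esub> x | x. x \<in> K}"

definition is_sylow :: "('c,'d) monoid_scheme \<Rightarrow> nat \<Rightarrow> 'c set \<Rightarrow> 'c set \<Rightarrow> bool" where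
  "is_sylow G p K P \<longleftrightarrow> subgroup P G \<and> P \<subseteq> K \<and> card P = p ^ multiplicity p (card K)"

end

theory Submission
  imports Defs
begin

lemma card_fibers_const:
  assumes "finite S" "\<And>z. z \<in> f ` S \<Longrightarrow> card {x\<in>S. f x = z} = c"
  shows "card S = card (f ` S) * c"
proof -
  have "S = (\<Union>z\<in>f ` S. {x\<in>S. f x = z})" by auto
  hence "card S = card (\<Union>z\<in>f ` S. {x\<in>S. f x = z})" by simp
  also have "\<dots> = (\<Sum>z\<in>f ` S. card {x\<in>S. f x = z})"
    by (rule card_UN_disjoint) (use assms in auto)
  also have "\<dots> = (\<Sum>z\<in>f ` S. c)" using assms(2) by simp
  finally show ?thesis by simp
qed

context group begin

lemma cancel1[simp]: "x \<in> carrier G \<Longrightarrow> y \<in> carrier G \<Longrightarrow> x \<otimes> (inv x \<otimes> y) = y"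
  by (simp flip: m_assoc)
lemma cancel2[simp]: "x \<in> carrier G \<Longrightarrow> y \<in> carrier G \<Longrightarrow> inv x \<otimes> (x \<otimes> y) = y"
  by (simp flip: m_assoc)

lemma comm_assoc: "c \<in> carrier G \<Longrightarrow> g \<in> carrier G \<Longrightarrow> W \<in> carrier G \<Longrightarrow> c \<otimes> g = g \<otimes> c
   \<Longrightarrow> c \<otimes> (g \<otimes> W) = g \<otimes> (c \<otimes> W)"
  by (metis m_assoc)

lemma conj_mult: "x \<in> carrier G \<Longrightarrow> y \<in> carrier G \<Longrightarrow> g \<in> carrier G \<Longrightarrow>
   (x \<otimes> y) \<otimes> g \<otimes> inv (x \<otimes> y) = x \<otimes> (y \<otimes> g \<otimes> inv y) \<otimes> inv x"
  by (simp add: m_assoc inv_mult_group)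

lemma conj_comm: "c \<in> carrier G \<Longrightarrow> g \<in> carrier G \<Longrightarrow> c \<otimes> g = g \<otimes> c \<Longrightarrow> c \<otimes> g \<otimes> inv c = g"
  by (metis inv_solve_right m_closed)

lemma conj_eq_iff:
  assumes "x \<in> carrier G" "y \<in> carrier G" "g \<in> carrier G"
  shows "(x \<otimes> g \<otimes> inv x = y \<otimes> g \<otimes> inv y) \<longleftrightarrow> (inv y \<otimes> x) \<otimes> g = g \<otimes> (inv y \<otimes> x)"
proof -
  have "(x \<otimes> g \<otimes> inv x = y \<otimes> g \<otimes> inv y) \<longleftrightarrow> inv y \<otimes> (x \<otimes> g \<otimes> inv x) \<otimes> x = inv y \<otimes> (y \<otimes> g \<otimes> inv y) \<otimes> x"
    using assms by (metis inv_closed l_cancel m_closed r_cancel)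
  also have "inv y \<otimes> (y \<otimes> g \<otimes> inv y) \<otimes> x = g \<otimes> (inv y \<otimes> x)"
    using assms by (simp add: m_assoc)
  also have "inv y \<otimes> (x \<otimes> g \<otimes> inv x) \<otimes> x = (inv y \<otimes> x) \<otimes> g"
    using assms by (simp add: m_assoc)
  finally show ?thesis .
qed

lemma conj_fiber_count:
  assumes K: "subgroup K G" "finite K" and g: "g \<in> carrier G"
  shows "card {x\<in>K. x \<otimes> g \<otimes> inv x \<in> Y} = card (conjs G K g \<inter> Y) * card (centr G K g)"
proof -
  let ?f = "\<lambda>x. x \<otimes> g \<otimes> inv x"
  let ?S = "{x\<in>K. ?f x \<in> Y}"
  have Kc: "\<And>x. x \<in> K \<Longrightarrow> x \<in> carrier G" using subgroup.mem_carrier[OF K(1)] .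
  have img: "?f ` ?S = conjs G K g \<inter> Y" unfolding conjs_def by auto
  have "card ?S = card (?f ` ?S) * card (centr G K g)"
  proof (rule card_fibers_const)
    show "finite ?S" using K by simp
    fix z assume "z \<in> ?f ` ?S"
    then obtain y where y: "y \<in> K" "?f y \<in> Y" "z = ?f y" by auto
    have yc: "y \<in> carrier G" using y Kc by blast
    have "bij_betw (\<lambda>c. y \<otimes> c) (centr G K g) {x\<in>?S. ?f x = z}"
    proof (rule bij_betw_byWitness[where f' = "\<lambda>x. inv y \<otimes> x"])
      show "\<forall>a\<in>centr G K g. inv y \<otimes> (y \<otimes> a) = a"
        using yc Kc unfolding centr_def by auto
      show "\<forall>a\<in>{x \<in> ?S. ?f x = z}. y \<otimes> (inv y \<otimes> a) = a"
        using yc Kc by auto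
      show "(\<otimes>) y ` centr G K g \<subseteq> {x \<in> ?S. ?f x = z}"
      proof
        fix w assume "w \<in> (\<otimes>) y ` centr G K g"
        then obtain c where c: "c \<in> K" "c \<otimes> g = g \<otimes> c" "w = y \<otimes> c" unfolding centr_def by auto
        have cc: "c \<in> carrier G" using c Kc by blast
        have "?f w = y \<otimes> (c \<otimes> g \<otimes> inv c) \<otimes> inv y" using c(3) cc yc g conj_mult[of y c g] by simp
        also have "\<dots> = z" using conj_comm[OF cc g c(2)] y(3) by simp
        finally have fw: "?f w = z" .
        have "w \<in> K" using c y(1) K(1) by (simp add: subgroup.m_closed)
        then show "w \<in> {x \<in> ?S. ?f x = z}" using fw y(2,3) by simp
      qed
      show "(\<otimes>) (inv y) ` {x \<in> ?S. ?f x = z} \<subseteq> centr G K g"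
      proof
        fix w assume "w \<in> (\<otimes>) (inv y) ` {x \<in> ?S. ?f x = z}"
        then obtain x where x: "x \<in> K" "?f x = ?f y" "w = inv y \<otimes> x" using y by auto
        have "w \<in> K" using x y K(1) by (simp add: subgroup.m_closed subgroup.m_inv_closed)
        moreover have "w \<otimes> g = g \<otimes> w" using x conj_eq_iff[of x y g] Kc yc g by auto
        ultimately show "w \<in> centr G K g" unfolding centr_def by auto
      qed
    qed
    then show "card {x\<in>?S. ?f x = z} = card (centr G K g)" by (simp add: bij_betw_same_card)
  qed
  with img show ?thesis by simp
qed

lemma orbit_stab:
  assumes K: "subgroup K G" "finite K" and g: "g \<in> carrier G"
  shows "card K = card (conjs G K g) * card (centr G K g)"
proof -
  have "{x\<in>K. x \<otimes> g \<otimes> inv x \<in> UNIV} = K" by simp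
  moreover have "conjs G K g \<inter> UNIV = conjs G K g" by simp
  ultimately show ?thesis using conj_fiber_count[OF K g, of UNIV] by simp
qed

end

context group begin

lemma inv_invol: "g \<in> carrier G \<Longrightarrow> g \<otimes> g = \<one> \<Longrightarrow> inv g = g"
  using inv_equality by blast

lemma invol_cancel:
  assumes "g \<in> carrier G" "g \<otimes> g = \<one>" "w \<in> carrier G"
  shows "g \<otimes> (g \<otimes> w) = w"
  using assms by (metis m_assoc l_one)

lemma conj_pow_invol:
  assumes "g \<in> carrier G" "g \<otimes> g = \<one>" "a \<in> carrier G"
  shows "g \<otimes> a [^] (n::nat) \<otimes> g = (g \<otimes> a \<otimes> g) [^] n"
proof (induction n)
  case 0 then show ?case using assms by simp
next
  case (Suc n)
  have "g \<otimes> a [^] Suc n \<otimes> g = (g \<otimes> a [^] n \<otimes> g) \<otimes> (g \<otimes> a \<otimes> g)"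
    using assms by (simp add: m_assoc invol_cancel)
  also have "\<dots> = (g \<otimes> a \<otimes> g) [^] Suc n" using Suc by simp
  finally show ?case .
qed

lemma subgroup_npow_closed:
  assumes "subgroup T G" "t \<in> T" shows "t [^] (n::nat) \<in> T"
  by (induction n) (use assms in \<open>auto simp: subgroup.one_closed subgroup.m_closed\<close>)

lemma subgroup_pow_card:
  assumes "subgroup T G" "finite T" "t \<in> T"
  shows "t [^] card T = \<one>"
proof -
  interpret T: group "G\<lparr>carrier := T\<rparr>" using subgroup.subgroup_is_group[OF assms(1) is_group] .
  have "t [^]\<^bsub>G\<lparr>carrier := T\<rparr>\<^esub> order (G\<lparr>carrier := T\<rparr>) = \<one>\<^bsub>G\<lparr>carrier := T\<rparr>\<^esub>"
    using assms T.pow_order_eq_1 by simp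
  then show ?thesis by (simp add: order_def nat_pow_consistent[symmetric])
qed

lemma odd_invol_conj:
  assumes T: "subgroup T G" "finite T" "odd (card T)"
    and g: "g \<in> carrier G" "g \<otimes> g = \<one>" and t: "t \<in> T"
    and y2: "(g \<otimes> t) \<otimes> (g \<otimes> t) = \<one>"
  shows "\<exists>s\<in>T. s \<otimes> g \<otimes> inv s = g \<otimes> t"
proof -
  have tc: "t \<in> carrier G" using subgroup.mem_carrier[OF T(1) t] .
  obtain j where j: "card T = Suc (2*j)" using T(3) by (metis oddE Suc_eq_plus1 add.commute)
  define s where "s = t [^] j"
  have sT: "s \<in> T" unfolding s_def using subgroup_npow_closed[OF T(1) t] .
  have sc: "s \<in> carrier G" using subgroup.mem_carrier[OF T(1) sT] .
  have "t [^] (2*j) \<otimes> t = \<one>" using subgroup_pow_card[OF T(1,2) t] j by simp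
  hence ss: "s \<otimes> s = inv t" unfolding s_def using tc
    by (metis inv_equality mult_2 nat_pow_closed nat_pow_mult)
  have gtg: "g \<otimes> t \<otimes> g = inv t"
    using y2 g tc by (metis inv_equality m_assoc m_closed)
  have gsg: "g \<otimes> s \<otimes> g = inv s"
    unfolding s_def using conj_pow_invol[OF g tc, of j] gtg tc by (simp add: nat_pow_inv)
  have gis: "g \<otimes> inv s = s \<otimes> g"
  proof -
    have "g \<otimes> inv s = g \<otimes> (g \<otimes> s \<otimes> g)" using gsg by simp
    also have "\<dots> = s \<otimes> g" using g sc by (simp flip: m_assoc)
    finally show ?thesis .
  qed
  have "s \<otimes> g \<otimes> inv s = s \<otimes> (s \<otimes> g)" using gis g sc by (simp add: m_assoc)
  also have "\<dots> = inv t \<otimes> g" using ss g sc by (simp flip: m_assoc)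
  also have "\<dots> = g \<otimes> t \<otimes> g \<otimes> g" using gtg by simp
  also have "\<dots> = g \<otimes> t" using g tc by (simp add: m_assoc)
  finally show ?thesis using sT by blast
qed

end

context group begin

lemma step_odd:
  assumes G': "group G'"
  and L: "subgroup L G" "finite L"
  and psi_c: "\<And>x. x \<in> L \<Longrightarrow> psi x \<in> carrier G'"
  and psi_m: "\<And>x y. x \<in> L \<Longrightarrow> y \<in> L \<Longrightarrow> psi (x \<otimes> y) = psi x \<otimes>\<^bsub>G'\<^esub> psi y"
  and T: "T = {x \<in> L. psi x = \<one>\<^bsub>G'\<^esub>}"
  and oddT: "odd (card T)"
  and g: "g \<in> L" "g \<otimes> g = \<one>"
  shows "card (conjs G L g) = card (conjs G T g) * card (conjs G' (psi ` L) (psi g))"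
proof -
  interpret G': group G' by fact
  interpret L: subgroup L G by fact
  have Lc: "\<And>x. x \<in> L \<Longrightarrow> x \<in> carrier G" by auto
  have gc: "g \<in> carrier G" using g Lc by blast
  have psi1: "psi \<one> = \<one>\<^bsub>G'\<^esub>"
    using psi_m[of \<one> \<one>] psi_c[of \<one>] by (metis G'.l_cancel_one' L.one_closed l_one one_closed)
  have psii: "psi (inv x) = inv\<^bsub>G'\<^esub> (psi x)" if "x \<in> L" for x
  proof -
    have "psi (inv x) \<otimes>\<^bsub>G'\<^esub> psi x = \<one>\<^bsub>G'\<^esub>"
      using psi_m[of "inv x" x] that psi1 by (simp add: Lc)
    then show ?thesis using that psi_c by (metis G'.inv_equality L.m_inv_closed)
  qed
  have psij: "psi (x \<otimes> y \<otimes> inv x) = psi x \<otimes>\<^bsub>G'\<^esub> psi y \<otimes>\<^bsub>G'\<^esub> inv\<^bsub>G'\<^esub> (psi x)"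
    if "x \<in> L" "y \<in> L" for x y using that by (simp add: psi_m psii)
  have TL: "T \<subseteq> L" using T by auto
  have Tsub: "subgroup T G"
  proof
    show "T \<subseteq> carrier G" using TL by auto
    show "x \<otimes> y \<in> T" if "x \<in> T" "y \<in> T" for x y using that T psi_m by auto
    show "\<one> \<in> T" using T psi1 by auto
    show "inv x \<in> T" if "x \<in> T" for x using that T psii by auto
  qed
  have finT: "finite T" using TL L(2) finite_subset by blast
  let ?S = "conjs G L g"
  have Sc: "?S \<subseteq> L" unfolding conjs_def using g by auto
  have finS: "finite ?S" using Sc L(2) finite_subset by blast
  have img: "psi ` ?S = conjs G' (psi ` L) (psi g)"
  proof
    show "psi ` ?S \<subseteq> conjs G' (psi ` L) (psi g)" unfolding conjs_def using g psij by auto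
    show "conjs G' (psi ` L) (psi g) \<subseteq> psi ` ?S"
    proof
      fix z assume "z \<in> conjs G' (psi ` L) (psi g)"
      then obtain x where x: "x \<in> L" "z = psi x \<otimes>\<^bsub>G'\<^esub> psi g \<otimes>\<^bsub>G'\<^esub> inv\<^bsub>G'\<^esub> psi x"
        unfolding conjs_def by auto
      then have "z = psi (x \<otimes> g \<otimes> inv x)" using psij g by simp
      moreover have "x \<otimes> g \<otimes> inv x \<in> ?S" unfolding conjs_def using x by auto
      ultimately show "z \<in> psi ` ?S" by blast
    qed
  qed
  have fib0: "{y \<in> ?S. psi y = psi g} = conjs G T g"
  proof
    show "conjs G T g \<subseteq> {y \<in> ?S. psi y = psi g}"
    proof
      fix y assume "y \<in> conjs G T g"
      then obtain t where t: "t \<in> T" "y = t \<otimes> g \<otimes> inv t" unfolding conjs_def by auto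
      have "psi y = psi g" using t T g psij[of t g] psi_c by auto
      then show "y \<in> {y \<in> ?S. psi y = psi g}" using t TL unfolding conjs_def by auto
    qed
    show "{y \<in> ?S. psi y = psi g} \<subseteq> conjs G T g"
    proof
      fix y assume y: "y \<in> {y \<in> ?S. psi y = psi g}"
      then obtain x where x: "x \<in> L" "y = x \<otimes> g \<otimes> inv x" unfolding conjs_def by auto
      have xc: "x \<in> carrier G" using x Lc by blast
      have yL: "y \<in> L" using y Sc by auto
      have yc: "y \<in> carrier G" using yL Lc by blast
      define t where "t = g \<otimes> y"
      have tT: "t \<in> T"
      proof -
        have "psi t = psi g \<otimes>\<^bsub>G'\<^esub> psi g" unfolding t_def using psi_m g yL y by simp
        also have "\<dots> = \<one>\<^bsub>G'\<^esub>" using psi_m[of g g] g psi1 by simp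
        finally show ?thesis using T t_def g yL by auto
      qed
      have gt: "g \<otimes> t = y" unfolding t_def using g gc yc by (simp add: invol_cancel g(2))
      have "y \<otimes> y = \<one>" using x g xc gc
        by (simp add: m_assoc invol_cancel)
      then obtain s where "s \<in> T" "s \<otimes> g \<otimes> inv s = g \<otimes> t"
        using odd_invol_conj[OF Tsub finT oddT gc g(2) tT] gt by auto
      then show "y \<in> conjs G T g" unfolding conjs_def using gt by auto
    qed
  qed
  have "card ?S = card (psi ` ?S) * card (conjs G T g)"
  proof (rule card_fibers_const[OF finS])
    fix z assume "z \<in> psi ` ?S"
    then obtain x where x: "x \<in> L" "z = psi (x \<otimes> g \<otimes> inv x)" unfolding conjs_def by auto
    have xc: "x \<in> carrier G" using x Lc by blast
    have "bij_betw (\<lambda>y. x \<otimes> y \<otimes> inv x) {y \<in> ?S. psi y = psi g} {y \<in> ?S. psi y = z}"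
    proof (rule bij_betw_byWitness[where f' = "\<lambda>y. inv x \<otimes> y \<otimes> x"])
      show "\<forall>a\<in>{y \<in> ?S. psi y = psi g}. inv x \<otimes> (x \<otimes> a \<otimes> inv x) \<otimes> x = a"
        using Sc Lc xc by (auto simp: m_assoc)
      show "\<forall>a\<in>{y \<in> ?S. psi y = z}. x \<otimes> (inv x \<otimes> a \<otimes> x) \<otimes> inv x = a"
        using Sc Lc xc by (auto simp: m_assoc)
      show "(\<lambda>y. x \<otimes> y \<otimes> inv x) ` {y \<in> ?S. psi y = psi g} \<subseteq> {y \<in> ?S. psi y = z}"
      proof clarify
        fix y assume y: "y \<in> ?S" "psi y = psi g"
        then obtain w where w: "w \<in> L" "y = w \<otimes> g \<otimes> inv w" unfolding conjs_def by auto
        have "x \<otimes> y \<otimes> inv x = (x \<otimes> w) \<otimes> g \<otimes> inv (x \<otimes> w)"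
          using w xc Lc gc conj_mult by simp
        hence "x \<otimes> y \<otimes> inv x \<in> ?S" unfolding conjs_def using w x by auto
        moreover have "psi (x \<otimes> y \<otimes> inv x) = z"
          using x y Sc psij g by auto
        ultimately show "x \<otimes> y \<otimes> inv x \<in> ?S \<and> psi (x \<otimes> y \<otimes> inv x) = z" by simp
      qed
      show "(\<lambda>y. inv x \<otimes> y \<otimes> x) ` {y \<in> ?S. psi y = z} \<subseteq> {y \<in> ?S. psi y = psi g}"
      proof
        fix u assume "u \<in> (\<lambda>y. inv x \<otimes> y \<otimes> x) ` {y \<in> ?S. psi y = z}"
        then obtain y where y: "y \<in> ?S" "psi y = z" and u: "u = inv x \<otimes> y \<otimes> x" by auto
        then obtain w where w: "w \<in> L" "y = w \<otimes> g \<otimes> inv w" unfolding conjs_def by auto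
        have "inv x \<otimes> y \<otimes> x = (inv x \<otimes> w) \<otimes> g \<otimes> inv (inv x \<otimes> w)"
          using w xc Lc gc conj_mult[of "inv x" w g] by simp
        hence "inv x \<otimes> y \<otimes> x \<in> ?S" unfolding conjs_def using w x by auto
        moreover have "psi (inv x \<otimes> y \<otimes> x) = psi g"
        proof -
          have "psi (inv x \<otimes> y \<otimes> x) = psi (inv x \<otimes> y \<otimes> inv (inv x))" using xc by simp
          also have "\<dots> = inv\<^bsub>G'\<^esub> (psi x) \<otimes>\<^bsub>G'\<^esub> z \<otimes>\<^bsub>G'\<^esub> psi x"
            using psij[of "inv x" y] x y Sc psii psi_c[OF x(1)] subsetD[OF Sc y(1)] by auto
          also have "\<dots> = psi g"
            using x psij[of x g] g psi_c by (simp add: G'.m_assoc)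
          finally show ?thesis .
        qed
        ultimately show "u \<in> {y \<in> ?S. psi y = psi g}" using u by simp
      qed
    qed
    then show "card {y \<in> ?S. psi y = z} = card (conjs G T g)"
      using fib0 bij_betw_same_card by metis
  qed
  then show ?thesis using img by simp
qed

end

lemma (in group_action) two_group_fixed:
  assumes "finite (carrier G)" "card (carrier G) = 2^a" "finite E" "odd (card E)"
  shows "\<exists>x\<in>E. \<forall>g\<in>carrier G. \<phi> g x = x"
proof (rule ccontr)
  assume nf: "\<not> ?thesis"
  have ev: "even (card (orbit G \<phi> x))" if x: "x \<in> E" for x
  proof -
    have "card (orbit G \<phi> x) * card (stabilizer G \<phi> x) = 2^a"
      using orbit_stabilizer_theorem[OF x] assms(2) by (simp add: order_def)
    hence "card (orbit G \<phi> x) dvd 2^a" by (metis dvd_triv_left)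
    then obtain i where i: "card (orbit G \<phi> x) = 2^i"
      using divides_primepow_nat[of 2] by auto
    show ?thesis
    proof (cases i)
      case 0
      hence c1: "card (orbit G \<phi> x) = 1" using i by simp
      have "x \<in> orbit G \<phi> x" using orbit_refl[OF x] .
      hence "orbit G \<phi> x = {x}" using c1 by (metis card_1_singletonE singletonD)
      hence "\<forall>g\<in>carrier G. \<phi> g x = x" unfolding orbit_def by blast
      then show ?thesis using nf x by blast
    next
      case (Suc j) then show ?thesis using i by simp
    qed
  qed
  have "(\<Sum>orb\<in>orbits G E \<phi>. card orb) = (\<Sum>orb\<in>orbits G E \<phi>. \<Sum>x\<in>orb. 1)"
    by (rule sum.cong[OF refl]) (rule card_eq_sum)
  also have "\<dots> = (\<Sum>x\<in>E. 1)" using disjoint_sum[OF assms(3), of "\<lambda>_. 1"] .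
  also have "\<dots> = card E" by (rule card_eq_sum[symmetric])
  finally have "card E = (\<Sum>orb\<in>orbits G E \<phi>. card orb)" by simp
  moreover have "even (\<Sum>orb\<in>orbits G E \<phi>. card orb)"
    by (rule dvd_sum) (auto simp: orbits_def ev)
  ultimately show False using assms(4) by simp
qed

context group begin

lemma sylow_conj:
  assumes T: "subgroup T G" "finite T"
  and P: "subgroup P G" "P \<subseteq> T" "card P = 2 ^ multiplicity 2 (card T)"
  and Q: "subgroup Q G" "Q \<subseteq> T" "card Q = 2 ^ a"
  shows "\<exists>t\<in>T. \<forall>q\<in>Q. t \<otimes> q \<otimes> inv t \<in> P"
proof -
  have Tc: "T \<subseteq> carrier G" using subgroup.subset[OF T(1)] .
  have Pc: "P \<subseteq> carrier G" using subgroup.subset[OF P(1)] .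
  have Qc: "Q \<subseteq> carrier G" using subgroup.subset[OF Q(1)] .
  define E where "E = {P #> t | t. t \<in> T}"
  interpret T': group "G\<lparr>carrier := T\<rparr>" using subgroup.subgroup_is_group[OF T(1) is_group] .
  have PT': "subgroup P (G\<lparr>carrier := T\<rparr>)" using subgroup_incl[OF P(1) T(1) P(2)] .
  have rc: "rcosets\<^bsub>G\<lparr>carrier := T\<rparr>\<^esub> P = E"
    unfolding RCOSETS_def r_coset_def E_def by auto
  have cardE: "card E * card P = card T"
    using T'.lagrange[OF PT'] rc by (simp add: order_def)
  have oddE: "odd (card E)"
  proof -
    have "card T \<noteq> 0" using T subgroup.one_closed[OF T(1)] by auto
    then obtain y where y: "card T = 2 ^ multiplicity 2 (card T) * y" "\<not> 2 dvd y"
      using multiplicity_decompose'[of "card T" 2] by auto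
    hence "card E = y" using cardE P(3) by (metis mult.commute mult_cancel_left power_not_zero zero_neq_numeral)
    thus ?thesis using y by simp
  qed
  have finE: "finite E"
  proof -
    have "E \<subseteq> Pow T"
    proof
      fix C assume "C \<in> E"
      then obtain t where t: "t \<in> T" "C = P #> t" unfolding E_def by auto
      show "C \<in> Pow T" using t P(2) subgroup.m_closed[OF T(1)] unfolding r_coset_def by auto
    qed
    thus ?thesis by (rule finite_subset) (simp add: T(2))
  qed
  define \<phi> where "\<phi> = (\<lambda>q. \<lambda>C\<in>E. C #> inv q)"
  have Ecl: "C #> inv q \<in> E" if CE: "C \<in> E" "q \<in> Q" for C q
  proof -
    obtain t where t: "t \<in> T" "C = P #> t" using CE unfolding E_def by auto
    have "C #> inv q = P #> (t \<otimes> inv q)"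
      using t that Q(2) Tc Pc by (simp add: coset_mult_assoc subsetD)
    moreover have "t \<otimes> inv q \<in> T" using t that Q(2) T(1)
      by (simp add: subgroup.m_closed subgroup.m_inv_closed subsetD)
    ultimately show ?thesis unfolding E_def by blast
  qed
  have Ec: "C \<subseteq> carrier G" if "C \<in> E" for C
    using that Pc Tc unfolding E_def r_coset_def by auto
  have inv2: "C #> inv q #> q = C" if "C \<in> E" "q \<in> Q" for C q
    using that Ec Qc by (simp add: coset_mult_assoc subsetD coset_mult_one)
  interpret Q': group "G\<lparr>carrier := Q\<rparr>" using subgroup.subgroup_is_group[OF Q(1) is_group] .
  have Bij: "\<phi> q \<in> Bij E" if q: "q \<in> Q" for q
  proof -
    have iq: "inv q \<in> Q" using q subgroup.m_inv_closed[OF Q(1)] by blast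
    have "bij_betw (\<phi> q) E E"
    proof (rule bij_betw_byWitness[where f'="\<lambda>C. C #> q"])
      show "\<forall>C\<in>E. \<phi> q C #> q = C" unfolding \<phi>_def using inv2 q by simp
      show "\<forall>C\<in>E. \<phi> q (C #> q) = C" unfolding \<phi>_def using inv2[OF _ iq] Ecl[OF _ iq] q Qc
        by (simp add: subsetD)
      show "\<phi> q ` E \<subseteq> E" unfolding \<phi>_def using Ecl q by auto
      show "(\<lambda>C. C #> q) ` E \<subseteq> E" using Ecl[OF _ iq] q Qc by (auto simp: subsetD)
    qed
    then show ?thesis unfolding Bij_def \<phi>_def by simp
  qed
  have act: "group_action (G\<lparr>carrier := Q\<rparr>) E \<phi>"
    unfolding group_action_def group_hom_def group_hom_axioms_def
  proof (intro conjI)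
    show "group (G\<lparr>carrier := Q\<rparr>)" by (rule Q'.is_group)
    show "group (BijGroup E)" by (rule group_BijGroup)
    show "\<phi> \<in> hom (G\<lparr>carrier := Q\<rparr>) (BijGroup E)"
    proof (rule homI)
      fix q assume q: "q \<in> carrier (G\<lparr>carrier := Q\<rparr>)"
      then show "\<phi> q \<in> carrier (BijGroup E)" using Bij unfolding BijGroup_def by simp
    next
      fix q1 q2 assume q: "q1 \<in> carrier (G\<lparr>carrier := Q\<rparr>)" "q2 \<in> carrier (G\<lparr>carrier := Q\<rparr>)"
      hence q: "q1 \<in> Q" "q2 \<in> Q" by auto
      have qc: "q1 \<in> carrier G" "q2 \<in> carrier G" using q Qc by auto
      have "\<phi> q1 \<otimes>\<^bsub>BijGroup E\<^esub> \<phi> q2 = compose E (\<phi> q1) (\<phi> q2)"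
        using Bij q by (simp add: BijGroup_def)
      also have "\<dots> = \<phi> (q1 \<otimes> q2)"
      proof (rule ext)
        fix C show "compose E (\<phi> q1) (\<phi> q2) C = \<phi> (q1 \<otimes> q2) C"
        proof (cases "C \<in> E")
          case True
          have "C #> inv q2 #> inv q1 = C #> inv (q1 \<otimes> q2)"
            using True Ec qc by (simp add: inv_mult_group coset_mult_assoc)
          then show ?thesis using True Ecl[OF True q(2)] by (simp add: compose_def \<phi>_def)
        next
          case False then show ?thesis by (simp add: compose_def \<phi>_def)
        qed
      qed
      finally show "\<phi> (q1 \<otimes>\<^bsub>G\<lparr>carrier := Q\<rparr>\<^esub> q2) = \<phi> q1 \<otimes>\<^bsub>BijGroup E\<^esub> \<phi> q2"
        by simp
    qed
  qed
  interpret A: group_action "G\<lparr>carrier := Q\<rparr>" E \<phi> by (rule act)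
  obtain C where C: "C \<in> E" "\<forall>q\<in>Q. \<phi> q C = C"
    using A.two_group_fixed[of a] Q(3) finE oddE finite_subset[OF Q(2) T(2)] by auto
  obtain t where t: "t \<in> T" "C = P #> t" using C(1) unfolding E_def by auto
  have tc: "t \<in> carrier G" using t Tc by auto
  have "t \<otimes> q \<otimes> inv t \<in> P" if q: "q \<in> Q" for q
  proof -
    have qc: "q \<in> carrier G" using q Qc by auto
    have "C #> inv q = C" using C q unfolding \<phi>_def by auto
    hence "t \<otimes> inv q \<in> P #> t" using t tc qc subgroup.one_closed[OF P(1)]
      unfolding r_coset_def by force
    then obtain p where p: "p \<in> P" "t \<otimes> inv q = p \<otimes> t" unfolding r_coset_def by auto
    have pc: "p \<in> carrier G" using p Pc by auto
    have "t \<otimes> inv q \<otimes> inv t = p" using p tc pc qc by (simp add: m_assoc)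
    hence "inv (t \<otimes> inv q \<otimes> inv t) \<in> P" using p subgroup.m_inv_closed[OF P(1)] by simp
    moreover have "inv (t \<otimes> inv q \<otimes> inv t) = t \<otimes> q \<otimes> inv t"
      using tc qc by (simp add: inv_mult_group m_assoc)
    ultimately show ?thesis by simp
  qed
  then show ?thesis using t by blast
qed

end

context group begin

lemma conj_subgroup:
  assumes P: "subgroup P G" and y: "y \<in> carrier G"
  shows "subgroup ((\<lambda>p. y \<otimes> p \<otimes> inv y) ` P) G"
    and "card ((\<lambda>p. y \<otimes> p \<otimes> inv y) ` P) = card P"
proof -
  have Pc: "P \<subseteq> carrier G" using subgroup.subset[OF P] .
  show "subgroup ((\<lambda>p. y \<otimes> p \<otimes> inv y) ` P) G"
  proof
    show "(\<lambda>p. y \<otimes> p \<otimes> inv y) ` P \<subseteq> carrier G" using Pc y by auto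
    show "\<one> \<in> (\<lambda>p. y \<otimes> p \<otimes> inv y) ` P"
    proof
      show "\<one> = y \<otimes> \<one> \<otimes> inv y" using y by simp
      show "\<one> \<in> P" using subgroup.one_closed[OF P] .
    qed
    fix a b assume a: "a \<in> (\<lambda>p. y \<otimes> p \<otimes> inv y) ` P"
    then obtain p where p: "p \<in> P" "a = y \<otimes> p \<otimes> inv y" by auto
    have pc: "p \<in> carrier G" using p Pc by auto
    show "inv a \<in> (\<lambda>p. y \<otimes> p \<otimes> inv y) ` P"
    proof
      show "inv a = y \<otimes> inv p \<otimes> inv y" using p pc y by (simp add: inv_mult_group m_assoc)
      show "inv p \<in> P" using subgroup.m_inv_closed[OF P p(1)] .
    qed
    assume "b \<in> (\<lambda>p. y \<otimes> p \<otimes> inv y) ` P"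
    then obtain p' where p': "p' \<in> P" "b = y \<otimes> p' \<otimes> inv y" by auto
    have pc': "p' \<in> carrier G" using p' Pc by auto
    show "a \<otimes> b \<in> (\<lambda>p. y \<otimes> p \<otimes> inv y) ` P"
    proof
      show "a \<otimes> b = y \<otimes> (p \<otimes> p') \<otimes> inv y" using p p' pc pc' y by (simp add: m_assoc)
      show "p \<otimes> p' \<in> P" using subgroup.m_closed[OF P p(1) p'(1)] .
    qed
  qed
  have "inj_on (\<lambda>p. y \<otimes> p \<otimes> inv y) P"
  proof (rule inj_onI)
    fix a b assume ab: "a \<in> P" "b \<in> P" "y \<otimes> a \<otimes> inv y = y \<otimes> b \<otimes> inv y"
    have "a \<in> carrier G" "b \<in> carrier G" using ab Pc by auto
    then show "a = b" using ab(3) y by simp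
  qed
  then show "card ((\<lambda>p. y \<otimes> p \<otimes> inv y) ` P) = card P" by (rule card_image)
qed

lemma frattini:
  assumes L: "subgroup L G" "finite L"
  and T: "subgroup T G" "T \<subseteq> L" "\<And>x t. x \<in> L \<Longrightarrow> t \<in> T \<Longrightarrow> x \<otimes> t \<otimes> inv x \<in> T"
  and P: "subgroup P G" "P \<subseteq> T" "card P = 2 ^ multiplicity 2 (card T)"
  and x: "x \<in> L"
  shows "\<exists>w. w \<in> T #> x \<and> (\<forall>p\<in>carrier G. (w \<otimes> p \<otimes> inv w \<in> P) = (p \<in> P))"
proof -
  have Lc: "L \<subseteq> carrier G" using subgroup.subset[OF L(1)] .
  have Pc: "P \<subseteq> carrier G" using subgroup.subset[OF P(1)] .
  have xc: "x \<in> carrier G" using x Lc by auto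
  have ix: "inv x \<in> L" using subgroup.m_inv_closed[OF L(1) x] .
  have finT: "finite T" using T(2) L(2) finite_subset by auto
  let ?Q = "(\<lambda>p. inv x \<otimes> p \<otimes> inv (inv x)) ` P"
  have Qs: "subgroup ?Q G" and Qc: "card ?Q = card P" using conj_subgroup[OF P(1), of "inv x"] xc by auto
  have QT: "?Q \<subseteq> T" using T(3)[OF ix] P(2) by auto
  obtain t where t: "t \<in> T" "\<forall>q\<in>?Q. t \<otimes> q \<otimes> inv t \<in> P"
    using sylow_conj[OF T(1) finT P Qs QT, of "multiplicity 2 (card T)"] Qc P(3) by auto
  have tc: "t \<in> carrier G" using t T(2) Lc by auto
  define v where "v = t \<otimes> inv x"
  have vc: "v \<in> carrier G" using tc xc v_def by simp
  have vP: "v \<otimes> p \<otimes> inv v \<in> P" if "p \<in> P" for p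
  proof -
    have "v \<otimes> p \<otimes> inv v = t \<otimes> (inv x \<otimes> p \<otimes> inv (inv x)) \<otimes> inv t"
      using that Pc tc xc v_def by (simp add: m_assoc inv_mult_group subsetD)
    then show ?thesis using t(2) that by auto
  qed
  have surj: "(\<lambda>p. v \<otimes> p \<otimes> inv v) ` P = P"
  proof (rule card_subset_eq)
    show "finite P" using P(2) finT finite_subset by auto
    show "(\<lambda>p. v \<otimes> p \<otimes> inv v) ` P \<subseteq> P" using vP by auto
    show "card ((\<lambda>p. v \<otimes> p \<otimes> inv v) ` P) = card P" using conj_subgroup(2)[OF P(1) vc] .
  qed
  have normv: "(v \<otimes> p \<otimes> inv v \<in> P) = (p \<in> P)" if pc: "p \<in> carrier G" for p
  proof
    assume "v \<otimes> p \<otimes> inv v \<in> P"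
    then obtain p' where p': "p' \<in> P" "v \<otimes> p \<otimes> inv v = v \<otimes> p' \<otimes> inv v" using surj by force
    then have "p = p'" using pc vc Pc by (simp add: subsetD)
    then show "p \<in> P" using p' by simp
  qed (rule vP)
  define w where "w = inv v"
  have wc: "w \<in> carrier G" using vc w_def by simp
  have normw: "(w \<otimes> p \<otimes> inv w \<in> P) = (p \<in> P)" if pc: "p \<in> carrier G" for p
  proof -
    have "(p \<in> P) = (v \<otimes> (w \<otimes> p \<otimes> inv w) \<otimes> inv v \<in> P)"
      using pc vc w_def by (simp add: m_assoc)
    also have "\<dots> = (w \<otimes> p \<otimes> inv w \<in> P)" using normv wc pc by simp
    finally show ?thesis by simp
  qed
  have "w = (x \<otimes> inv t \<otimes> inv x) \<otimes> x" using w_def v_def tc xc by (simp add: inv_mult_group m_assoc)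
  moreover have "x \<otimes> inv t \<otimes> inv x \<in> T" using T(3)[OF x] subgroup.m_inv_closed[OF T(1) t(1)] by simp
  ultimately have "w \<in> T #> x" unfolding r_coset_def by auto
  then show ?thesis using normw by blast
qed

end

context group begin

lemma step_sylow:
  assumes L: "subgroup L G" "finite L"
  and T: "subgroup T G" "T \<subseteq> L" "\<And>x t. x \<in> L \<Longrightarrow> t \<in> T \<Longrightarrow> x \<otimes> t \<otimes> inv x \<in> T"
  and P: "subgroup P G" "P \<subseteq> T" "card P = 2 ^ multiplicity 2 (card T)"
  and g: "g \<in> T" "g \<otimes> g = \<one>"
  shows "card (conjs G T g \<inter> P) > 0"
    and "card (conjs G L g) * card (conjs G T g \<inter> P) = card (conjs G T g) * card (conjs G L g \<inter> P)"
proof -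
  have Lc: "L \<subseteq> carrier G" using subgroup.subset[OF L(1)] .
  have Tc: "T \<subseteq> carrier G" using subgroup.subset[OF T(1)] .
  have Pc: "P \<subseteq> carrier G" using subgroup.subset[OF P(1)] .
  have gc: "g \<in> carrier G" using g Tc by auto
  have finT: "finite T" using T(2) L(2) finite_subset by auto
  have finP: "finite P" using P(2) finT finite_subset by auto
  let ?Q = "{\<one>, g}"
  have Qs: "subgroup ?Q G"
  proof
    show "?Q \<subseteq> carrier G" using gc by auto
    show "\<one> \<in> ?Q" by simp
    fix a b assume a: "a \<in> ?Q"
    then show "inv a \<in> ?Q" using inv_invol[OF gc g(2)] by auto
    assume b: "b \<in> ?Q"
    then show "a \<otimes> b \<in> ?Q" using a gc g(2) by auto
  qed
  have QT: "?Q \<subseteq> T" using g subgroup.one_closed[OF T(1)] by auto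
  have "\<exists>a. card ?Q = 2 ^ a"
  proof (cases "g = \<one>")
    case True then show ?thesis by (intro exI[of _ 0]) simp
  next
    case False then show ?thesis by (intro exI[of _ 1]) simp
  qed
  then obtain a where a: "card ?Q = 2 ^ a" by blast
  obtain t where t: "t \<in> T" "\<forall>q\<in>?Q. t \<otimes> q \<otimes> inv t \<in> P"
    using sylow_conj[OF T(1) finT P Qs QT a] by blast
  have "t \<otimes> g \<otimes> inv t \<in> conjs G T g \<inter> P" using t unfolding conjs_def by auto
  then show pos: "card (conjs G T g \<inter> P) > 0" using finP by (metis card_gt_0_iff finite_Int empty_iff)
  define A where "A = {x\<in>L. x \<otimes> g \<otimes> inv x \<in> P}"
  define A' where "A' = {x\<in>T. x \<otimes> g \<otimes> inv x \<in> P}"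
  have cA: "card A = card (conjs G L g \<inter> P) * card (centr G L g)"
    unfolding A_def using conj_fiber_count[OF L gc] .
  have cA': "card A' = card (conjs G T g \<inter> P) * card (centr G T g)"
    unfolding A'_def using conj_fiber_count[OF T(1) finT gc] .
  have cL: "card L = card (conjs G L g) * card (centr G L g)" using orbit_stab[OF L gc] .
  have cT: "card T = card (conjs G T g) * card (centr G T g)" using orbit_stab[OF T(1) finT gc] .
  interpret L': group "G\<lparr>carrier := L\<rparr>" using subgroup.subgroup_is_group[OF L(1) is_group] .
  have TL': "subgroup T (G\<lparr>carrier := L\<rparr>)" using subgroup_incl[OF T(1) L(1) T(2)] .
  define R where "R = rcosets\<^bsub>G\<lparr>carrier := L\<rparr>\<^esub> T"
  have R_def': "R = {T #> x | x. x \<in> L}"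
    unfolding R_def RCOSETS_def r_coset_def by auto
  have cR: "card R * card T = card L" using L'.lagrange[OF TL'] R_def by (simp add: order_def)
  have UR: "\<Union>R = L" using L'.rcosets_part_G[OF TL'] R_def by simp
  have dR: "pairwise disjnt R" using L'.rcos_disjoint[OF TL'] R_def by simp
  have finR: "finite R" using UR L(2) by (metis finite_UnionD)
  have each: "card (A \<inter> c) = card A'" if c: "c \<in> R" for c
  proof -
    obtain x where x: "x \<in> L" "c = T #> x" using c R_def' by auto
    have xc: "x \<in> carrier G" using x Lc by auto
    obtain w where w: "w \<in> T #> x" "\<forall>p\<in>carrier G. (w \<otimes> p \<otimes> inv w \<in> P) = (p \<in> P)"
      using frattini[OF L T P x(1)] by blast
    obtain s where s: "s \<in> T" "w = s \<otimes> x" using w(1) unfolding r_coset_def by auto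
    have sc: "s \<in> carrier G" using s Tc by auto
    have wc: "w \<in> carrier G" using s sc xc by simp
    have wL: "w \<in> L" using s T(2) x subgroup.m_closed[OF L(1)] by auto
    have "bij_betw (\<lambda>t. w \<otimes> t) A' (A \<inter> c)"
    proof (rule bij_betw_byWitness[where f'="\<lambda>y. inv w \<otimes> y"])
      show "\<forall>a\<in>A'. inv w \<otimes> (w \<otimes> a) = a" using wc Tc unfolding A'_def by auto
      show "\<forall>a\<in>A \<inter> c. w \<otimes> (inv w \<otimes> a) = a" using wc Lc unfolding A_def by auto
      show "(\<lambda>t. w \<otimes> t) ` A' \<subseteq> A \<inter> c"
      proof
        fix y assume "y \<in> (\<lambda>t. w \<otimes> t) ` A'"
        then obtain t where tt: "t \<in> T" "t \<otimes> g \<otimes> inv t \<in> P" "y = w \<otimes> t" unfolding A'_def by auto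
        have tc: "t \<in> carrier G" using tt Tc by auto
        have yL: "y \<in> L" using tt wL T(2) subgroup.m_closed[OF L(1)] by auto
        have "y \<otimes> g \<otimes> inv y = w \<otimes> (t \<otimes> g \<otimes> inv t) \<otimes> inv w"
          using tt(3) wc tc gc conj_mult by simp
        hence "y \<otimes> g \<otimes> inv y \<in> P" using w(2) tt(2) tc gc by simp
        moreover have "y \<in> c"
        proof -
          have "y = (s \<otimes> (x \<otimes> t \<otimes> inv x)) \<otimes> x" using tt(3) s xc tc sc by (simp add: m_assoc)
          moreover have "s \<otimes> (x \<otimes> t \<otimes> inv x) \<in> T"
            using subgroup.m_closed[OF T(1) s(1) T(3)[OF x(1) tt(1)]] .
          ultimately show ?thesis using x(2) unfolding r_coset_def by auto
        qed
        ultimately show "y \<in> A \<inter> c" using yL unfolding A_def by auto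
      qed
      show "(\<lambda>y. inv w \<otimes> y) ` (A \<inter> c) \<subseteq> A'"
      proof
        fix u assume "u \<in> (\<lambda>y. inv w \<otimes> y) ` (A \<inter> c)"
        then obtain y where y: "y \<in> L" "y \<otimes> g \<otimes> inv y \<in> P" "y \<in> c" "u = inv w \<otimes> y"
          unfolding A_def by auto
        obtain r where r: "r \<in> T" "y = r \<otimes> x" using y(3) x(2) unfolding r_coset_def by auto
        have rc: "r \<in> carrier G" using r Tc by auto
        have yc: "y \<in> carrier G" using y Lc by auto
        have "u = inv x \<otimes> (inv s \<otimes> r) \<otimes> inv (inv x)"
          using y(4) s r xc sc rc by (simp add: inv_mult_group m_assoc)
        moreover have "inv s \<otimes> r \<in> T"
          using subgroup.m_closed[OF T(1) subgroup.m_inv_closed[OF T(1) s(1)] r(1)] .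
        ultimately have uT: "u \<in> T" using T(3)[OF subgroup.m_inv_closed[OF L(1) x(1)]] by simp
        have uc: "u \<in> carrier G" using uT Tc by auto
        have EQ: "w \<otimes> (u \<otimes> g \<otimes> inv u) \<otimes> inv w = y \<otimes> g \<otimes> inv y"
          using y(4) wc yc gc conj_mult[of w u g] uc by simp
        have ucg: "u \<otimes> g \<otimes> inv u \<in> carrier G" using uc gc by (intro m_closed inv_closed)
        have "w \<otimes> (u \<otimes> g \<otimes> inv u) \<otimes> inv w \<in> P" using y(2) by (subst EQ)
        then have "u \<otimes> g \<otimes> inv u \<in> P" by (rule iffD1[OF bspec[OF w(2) ucg]])
        then show "u \<in> A'" using uT unfolding A'_def by auto
      qed
    qed
    then show ?thesis by (simp add: bij_betw_same_card)
  qed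
  have "card A = card (\<Union>c\<in>R. A \<inter> c)"
  proof -
    have "A = (\<Union>c\<in>R. A \<inter> c)" using UR unfolding A_def by auto
    then show ?thesis by simp
  qed
  also have "\<dots> = (\<Sum>c\<in>R. card (A \<inter> c))"
  proof (rule card_UN_disjoint[OF finR])
    show "\<forall>c\<in>R. finite (A \<inter> c)" using UR L(2) by (auto intro: finite_subset)
    show "\<forall>i\<in>R. \<forall>j\<in>R. i \<noteq> j \<longrightarrow> A \<inter> i \<inter> (A \<inter> j) = {}"
      using dR unfolding pairwise_def disjnt_def by auto
  qed
  also have "\<dots> = card R * card A'" using each by simp
  finally have key: "card A * card T = card L * card A'" using cR by (simp add: algebra_simps)
  have CL: "card (centr G L g) > 0"
  proof -
    have "\<one> \<in> centr G L g" unfolding centr_def using subgroup.one_closed[OF L(1)] gc by simp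
    moreover have "finite (centr G L g)" using L(2) unfolding centr_def by simp
    ultimately show ?thesis by (metis card_gt_0_iff empty_iff)
  qed
  have CT: "card (centr G T g) > 0"
  proof -
    have "\<one> \<in> centr G T g" unfolding centr_def using subgroup.one_closed[OF T(1)] gc by simp
    moreover have "finite (centr G T g)" using finT unfolding centr_def by simp
    ultimately show ?thesis by (metis card_gt_0_iff empty_iff)
  qed
  from key cA cA' cL cT
  have "(card (conjs G L g \<inter> P) * card (conjs G T g)) * (card (centr G L g) * card (centr G T g))
      = (card (conjs G L g) * card (conjs G T g \<inter> P)) * (card (centr G L g) * card (centr G T g))"
    by (simp add: algebra_simps)
  then show "card (conjs G L g) * card (conjs G T g \<inter> P) = card (conjs G T g) * card (conjs G L g \<inter> P)"
    using CL CT by (simp add: algebra_simps)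
qed

end

lemma proj_to_mult:
  assumes "i \<le> j"
  shows "proj_to j r (x \<otimes>\<^bsub>product_group {i..r} Hs\<^esub> y) = proj_to j r x \<otimes>\<^bsub>product_group {j..r} Hs\<^esub> proj_to j r y"
  using assms by (auto simp: proj_to_def fun_eq_iff)

lemma proj_to_one: "i \<le> j \<Longrightarrow> proj_to j r \<one>\<^bsub>product_group {i..r} Hs\<^esub> = \<one>\<^bsub>product_group {j..r} Hs\<^esub>"
  by (auto simp: proj_to_def fun_eq_iff)

lemma proj_to_carrier: "i \<le> j \<Longrightarrow> x \<in> carrier (product_group {i..r} Hs) \<Longrightarrow> proj_to j r x \<in> carrier (product_group {j..r} Hs)"
  by (auto simp: proj_to_def PiE_iff)

lemma proj_to_proj: "i \<le> j \<Longrightarrow> proj_to j r (proj_to i r x) = proj_to j r x"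
  by (auto simp: proj_to_def fun_eq_iff)

lemma proj_to_id: "x \<in> carrier (product_group {i..r} Hs) \<Longrightarrow> proj_to i r x = x"
  by (simp add: proj_to_def PiE_def extensional_restrict)

locale prodctx =
  fixes Hs :: "nat \<Rightarrow> ('a,'b) monoid_scheme" and r :: nat and H :: "(nat \<Rightarrow> 'a) set"
  assumes grps: "\<And>i. i \<in> {1..r} \<Longrightarrow> group (Hs i)"
    and fin: "\<And>i. i \<in> {1..r} \<Longrightarrow> finite (carrier (Hs i))"
    and sub: "subgroup H (product_group {1..r} Hs)"
begin

lemma grp: "1 \<le> i \<Longrightarrow> group (product_group {i..r} Hs)"
  by (rule product_group) (use grps in auto)

lemma hom: "1 \<le> i \<Longrightarrow> i \<le> j \<Longrightarrow> proj_to j r \<in> hom (product_group {i..r} Hs) (product_group {j..r} Hs)"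
proof (rule homI)
  fix x assume "i \<le> j" "x \<in> carrier (product_group {i..r} Hs)"
  then show "proj_to j r x \<in> carrier (product_group {j..r} Hs)" by (rule proj_to_carrier)
next
  fix x y assume "i \<le> j"
  then show "proj_to j r (x \<otimes>\<^bsub>product_group {i..r} Hs\<^esub> y) = proj_to j r x \<otimes>\<^bsub>product_group {j..r} Hs\<^esub> proj_to j r y"
    by (rule proj_to_mult)
qed

lemma ghom: "1 \<le> i \<Longrightarrow> i \<le> j \<Longrightarrow> group_hom (product_group {i..r} Hs) (product_group {j..r} Hs) (proj_to j r)"
  unfolding group_hom_def group_hom_axioms_def using grp hom by auto

lemma Hc: "H \<subseteq> carrier (product_group {1..r} Hs)" using subgroup.subset[OF sub] .

lemma finH: "finite H"
proof -
  have "finite (carrier (product_group {1..r} Hs))" unfolding carrier_product_group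
    by (intro finite_PiE) (auto intro: fin)
  then show ?thesis using Hc finite_subset by auto
qed

lemma L1: "Lproj H r 1 = H"
proof -
  have eq: "\<And>x. x \<in> H \<Longrightarrow> proj_to 1 r x = x" by (rule proj_to_id[OF subsetD[OF Hc]])
  have "proj_to 1 r ` H = (\<lambda>x. x) ` H" by (rule image_cong[OF refl eq])
  then show ?thesis unfolding Lproj_def by simp
qed

lemma Lsub: assumes "1 \<le> i" shows "subgroup (Lproj H r i) (product_group {i..r} Hs)"
  unfolding Lproj_def using group_hom.subgroup_img_is_subgroup[OF ghom[OF order_refl assms] sub] .

lemma Lfin: "finite (Lproj H r i)"
  unfolding Lproj_def using finH by simp

lemma Lnext: assumes "i \<le> j" shows "proj_to j r ` Lproj H r i = Lproj H r j"
  unfolding Lproj_def image_image by (simp add: proj_to_proj[OF assms])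

lemma Lc: "1 \<le> i \<Longrightarrow> Lproj H r i \<subseteq> carrier (product_group {i..r} Hs)"
  using subgroup.subset[OF Lsub] .

lemma Tsub:
  assumes i: "1 \<le> i" "i \<le> r"
  shows "subgroup (Tker Hs H r i) (product_group {i..r} Hs)"
    and "Tker Hs H r i \<subseteq> Lproj H r i"
    and "\<And>x t. x \<in> Lproj H r i \<Longrightarrow> t \<in> Tker Hs H r i \<Longrightarrow>
          x \<otimes>\<^bsub>product_group {i..r} Hs\<^esub> t \<otimes>\<^bsub>product_group {i..r} Hs\<^esub> inv\<^bsub>product_group {i..r} Hs\<^esub> x \<in> Tker Hs H r i"
proof -
  interpret Gi: group "product_group {i..r} Hs" using grp i by simp
  interpret L: subgroup "Lproj H r i" "product_group {i..r} Hs" using Lsub i by simp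
  have "subgroup (Tker Hs H r i) (product_group {i..r} Hs) \<and> Tker Hs H r i \<subseteq> Lproj H r i \<and>
    (\<forall>x t. x \<in> Lproj H r i \<longrightarrow> t \<in> Tker Hs H r i \<longrightarrow>
          x \<otimes>\<^bsub>product_group {i..r} Hs\<^esub> t \<otimes>\<^bsub>product_group {i..r} Hs\<^esub> inv\<^bsub>product_group {i..r} Hs\<^esub> x \<in> Tker Hs H r i)"
  proof (cases "i < r")
    case True
    interpret h: group_hom "product_group {i..r} Hs" "product_group {Suc i..r} Hs" "proj_to (Suc i) r"
      using ghom[of i "Suc i"] i by simp
    have T: "Tker Hs H r i = {x \<in> Lproj H r i. proj_to (Suc i) r x = \<one>\<^bsub>product_group {Suc i..r} Hs\<^esub>}"
      unfolding Tker_def using True by simp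
    have s: "subgroup (Tker Hs H r i) (product_group {i..r} Hs)"
    proof
      show "Tker Hs H r i \<subseteq> carrier (product_group {i..r} Hs)" using T L.subset by auto
      show "\<one>\<^bsub>product_group {i..r} Hs\<^esub> \<in> Tker Hs H r i" unfolding T using L.one_closed h.hom_one by blast
      fix x y assume x: "x \<in> Tker Hs H r i"
      then show "inv\<^bsub>product_group {i..r} Hs\<^esub> x \<in> Tker Hs H r i" using T L.subset
        by (auto simp del: one_product_group simp: h.hom_inv subsetD)
      assume y: "y \<in> Tker Hs H r i"
      have xy: "x \<in> Lproj H r i" "y \<in> Lproj H r i"
        "proj_to (Suc i) r x = \<one>\<^bsub>product_group {Suc i..r} Hs\<^esub>"
        "proj_to (Suc i) r y = \<one>\<^bsub>product_group {Suc i..r} Hs\<^esub>" using x y T by auto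
      have "proj_to (Suc i) r (x \<otimes>\<^bsub>product_group {i..r} Hs\<^esub> y)
          = proj_to (Suc i) r x \<otimes>\<^bsub>product_group {Suc i..r} Hs\<^esub> proj_to (Suc i) r y"
        by (rule h.hom_mult) (use xy L.subset in auto)
      also have "\<dots> = \<one>\<^bsub>product_group {Suc i..r} Hs\<^esub>" unfolding xy(3,4)
        by (rule h.H.l_one[OF h.H.one_closed])
      finally show "x \<otimes>\<^bsub>product_group {i..r} Hs\<^esub> y \<in> Tker Hs H r i"
        using T xy L.m_closed by auto
    qed
    moreover have "\<forall>x t. x \<in> Lproj H r i \<longrightarrow> t \<in> Tker Hs H r i \<longrightarrow>
          x \<otimes>\<^bsub>product_group {i..r} Hs\<^esub> t \<otimes>\<^bsub>product_group {i..r} Hs\<^esub> inv\<^bsub>product_group {i..r} Hs\<^esub> x \<in> Tker Hs H r i"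
    proof (intro allI impI)
      fix x t assume x: "x \<in> Lproj H r i" and t: "t \<in> Tker Hs H r i"
      have xc: "x \<in> carrier (product_group {i..r} Hs)" using x L.subset by auto
      have tc: "t \<in> carrier (product_group {i..r} Hs)" using t T L.subset by auto
      have "proj_to (Suc i) r t = \<one>\<^bsub>product_group {Suc i..r} Hs\<^esub>" using t T by simp
      then have "proj_to (Suc i) r (x \<otimes>\<^bsub>product_group {i..r} Hs\<^esub> t \<otimes>\<^bsub>product_group {i..r} Hs\<^esub> inv\<^bsub>product_group {i..r} Hs\<^esub> x) = \<one>\<^bsub>product_group {Suc i..r} Hs\<^esub>"
        using xc tc h.hom_closed[OF xc]
        by (simp del: one_product_group mult_product_group inv_product_group carrier_product_group
            add: h.hom_mult h.hom_inv)
      moreover have "x \<otimes>\<^bsub>product_group {i..r} Hs\<^esub> t \<otimes>\<^bsub>product_group {i..r} Hs\<^esub> inv\<^bsub>product_group {i..r} Hs\<^esub> x \<in> Lproj H r i"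
        using x t T by (intro L.m_closed L.m_inv_closed) auto
      ultimately show "x \<otimes>\<^bsub>product_group {i..r} Hs\<^esub> t \<otimes>\<^bsub>product_group {i..r} Hs\<^esub> inv\<^bsub>product_group {i..r} Hs\<^esub> x \<in> Tker Hs H r i"
        using T by simp
    qed
    ultimately show ?thesis using T by auto
  next
    case False
    then have T: "Tker Hs H r i = Lproj H r i" unfolding Tker_def by simp
    have "x \<otimes>\<^bsub>product_group {i..r} Hs\<^esub> t \<otimes>\<^bsub>product_group {i..r} Hs\<^esub> inv\<^bsub>product_group {i..r} Hs\<^esub> x \<in> Lproj H r i"
      if "x \<in> Lproj H r i" "t \<in> Lproj H r i" for x t using that by (intro L.m_closed L.m_inv_closed)
    then show ?thesis unfolding T using Lsub i by auto
  qed
  then show "subgroup (Tker Hs H r i) (product_group {i..r} Hs)"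
    and "Tker Hs H r i \<subseteq> Lproj H r i"
    and "\<And>x t. x \<in> Lproj H r i \<Longrightarrow> t \<in> Tker Hs H r i \<Longrightarrow>
          x \<otimes>\<^bsub>product_group {i..r} Hs\<^esub> t \<otimes>\<^bsub>product_group {i..r} Hs\<^esub> inv\<^bsub>product_group {i..r} Hs\<^esub> x \<in> Tker Hs H r i"
    by auto
qed

end

theorem lemma2p3:
  fixes Hs :: "nat \<Rightarrow> ('a,'b) monoid_scheme"
    and r k :: nat
    and H :: "(nat \<Rightarrow> 'a) set"
    and g :: "nat \<Rightarrow> 'a"
    and P :: "(nat \<Rightarrow> 'a) set"
  assumes r: "1 \<le> r"
    and grps: "\<And>i. i \<in> {1..r} \<Longrightarrow> group (Hs i)"
    and fin: "\<And>i. i \<in> {1..r} \<Longrightarrow> finite (carrier (Hs i))"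
    and sub: "subgroup H (product_group {1..r} Hs)"
    and gH: "g \<in> H"
    and inv1: "g \<noteq> \<one>\<^bsub>product_group {1..r} Hs\<^esub>"
    and inv2: "g \<otimes>\<^bsub>product_group {1..r} Hs\<^esub> g = \<one>\<^bsub>product_group {1..r} Hs\<^esub>"
    and k: "1 \<le> k" "k \<le> r"
    and odd: "\<And>i. 1 \<le> i \<Longrightarrow> i < k \<Longrightarrow> odd (card (Tker Hs H r i))"
    and even: "even (card (Tker Hs H r k))"
    and gk: "k < r \<Longrightarrow> proj_to (k+1) r g = \<one>\<^bsub>product_group {k+1..r} Hs\<^esub>"
    and syl: "is_sylow (product_group {k..r} Hs) 2 (Tker Hs H r k) P"
  shows "real (card H) / real (card (centr (product_group {1..r} Hs) H g)) =
     (\<Prod>i=1..k. real (card (Tker Hs H r i))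
        / real (card (centr (product_group {i..r} Hs) (Tker Hs H r i) (proj_to i r g))))
     * (real (card (conjs (product_group {k..r} Hs) (Lproj H r k) (proj_to k r g) \<inter> P))
        / real (card (conjs (product_group {k..r} Hs) (Tker Hs H r k) (proj_to k r g) \<inter> P)))"
proof -
  interpret S: prodctx Hs r H by (rule prodctx.intro[OF grps fin sub])
  define c where "c i = real (card (conjs (product_group {i..r} Hs) (Lproj H r i) (proj_to i r g)))" for i
  define t where "t i = real (card (conjs (product_group {i..r} Hs) (Tker Hs H r i) (proj_to i r g)))" for i
  define ratio where "ratio = real (card (conjs (product_group {k..r} Hs) (Lproj H r k) (proj_to k r g) \<inter> P))
        / real (card (conjs (product_group {k..r} Hs) (Tker Hs H r k) (proj_to k r g) \<inter> P))"
  have gc: "g \<in> carrier (product_group {1..r} Hs)" using gH S.Hc by auto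
  have giL: "proj_to i r g \<in> Lproj H r i" for i using gH unfolding Lproj_def by auto
  have gic: "proj_to i r g \<in> carrier (product_group {i..r} Hs)" if "1 \<le> i" for i
    using S.Lc[OF that] giL by auto
  have gi2: "proj_to i r g \<otimes>\<^bsub>product_group {i..r} Hs\<^esub> proj_to i r g = \<one>\<^bsub>product_group {i..r} Hs\<^esub>"
    if "1 \<le> i" for i
  proof -
    have "proj_to i r (g \<otimes>\<^bsub>product_group {1..r} Hs\<^esub> g) = proj_to i r g \<otimes>\<^bsub>product_group {i..r} Hs\<^esub> proj_to i r g"
      by (rule proj_to_mult) (rule that)
    then show ?thesis using inv2 proj_to_one[OF that, of r Hs] by metis
  qed
  have g1: "proj_to 1 r g = g" using proj_to_id[OF gc] .
  have os: "real (card K) / real (card (centr (product_group {i..r} Hs) K x))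
      = real (card (conjs (product_group {i..r} Hs) K x))"
    if i: "1 \<le> i" and K: "subgroup K (product_group {i..r} Hs)" "finite K"
      and xc: "x \<in> carrier (product_group {i..r} Hs)" for i K x
  proof -
    interpret Gi: group "product_group {i..r} Hs" using S.grp[OF i] .
    have e: "card K = card (conjs (product_group {i..r} Hs) K x) * card (centr (product_group {i..r} Hs) K x)"
      using Gi.orbit_stab[OF K xc] .
    have "\<one>\<^bsub>product_group {i..r} Hs\<^esub> \<in> centr (product_group {i..r} Hs) K x"
      unfolding centr_def using subgroup.one_closed[OF K(1)] xc
      by (simp del: one_product_group mult_product_group carrier_product_group)
    moreover have "finite (centr (product_group {i..r} Hs) K x)" using K(2) unfolding centr_def by simp
    ultimately have "card (centr (product_group {i..r} Hs) K x) > 0"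
      by (metis card_gt_0_iff empty_iff)
    then show ?thesis using e by (simp add: field_simps)
  qed
  have lhs: "real (card H) / real (card (centr (product_group {1..r} Hs) H g)) = c 1"
    using os[of 1 H g] sub S.finH gc unfolding c_def S.L1 g1 by simp
  have Tfin: "finite (Tker Hs H r i)" if "1 \<le> i" "i \<le> r" for i
    using S.Tsub(2)[OF that] S.Lfin finite_subset by metis
  have tr: "real (card (Tker Hs H r i)) / real (card (centr (product_group {i..r} Hs) (Tker Hs H r i) (proj_to i r g))) = t i"
    if i: "i \<in> {1..k}" for i
  proof -
    have i': "1 \<le> i" "i \<le> r" using i k by auto
    show ?thesis unfolding t_def using os[OF i'(1) S.Tsub(1)[OF i'] Tfin[OF i'] gic[OF i'(1)]] .
  qed
  have st: "c i = t i * c (Suc i)" if i: "1 \<le> i" "i < k" for i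
  proof -
    have ir: "i < r" using i k by auto
    interpret Gi: group "product_group {i..r} Hs" using S.grp[OF i(1)] .
    have T: "Tker Hs H r i = {x \<in> Lproj H r i. proj_to (Suc i) r x = \<one>\<^bsub>product_group {Suc i..r} Hs\<^esub>}"
      unfolding Tker_def using ir by simp
    have "card (conjs (product_group {i..r} Hs) (Lproj H r i) (proj_to i r g))
        = card (conjs (product_group {i..r} Hs) (Tker Hs H r i) (proj_to i r g))
          * card (conjs (product_group {Suc i..r} Hs) (proj_to (Suc i) r ` Lproj H r i) (proj_to (Suc i) r (proj_to i r g)))"
    proof (rule Gi.step_odd[OF S.grp S.Lsub[OF i(1)] S.Lfin _ _ T])
      show "1 \<le> Suc i" by simp
      show "proj_to (Suc i) r x \<in> carrier (product_group {Suc i..r} Hs)" if "x \<in> Lproj H r i" for x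
        using proj_to_carrier[of i "Suc i" x r Hs] S.Lc[OF i(1)] that by auto
      show "proj_to (Suc i) r (x \<otimes>\<^bsub>product_group {i..r} Hs\<^esub> y) =
          proj_to (Suc i) r x \<otimes>\<^bsub>product_group {Suc i..r} Hs\<^esub> proj_to (Suc i) r y" for x y
        by (rule proj_to_mult) simp
      show "odd (card (Tker Hs H r i))" using odd i by simp
      show "proj_to i r g \<in> Lproj H r i" by (rule giL)
      show "proj_to i r g \<otimes>\<^bsub>product_group {i..r} Hs\<^esub> proj_to i r g = \<one>\<^bsub>product_group {i..r} Hs\<^esub>"
        by (rule gi2[OF i(1)])
    qed
    moreover have "proj_to (Suc i) r ` Lproj H r i = Lproj H r (Suc i)" by (rule S.Lnext) simp
    moreover have "proj_to (Suc i) r (proj_to i r g) = proj_to (Suc i) r g" by (rule proj_to_proj) simp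
    ultimately show ?thesis unfolding c_def t_def by simp
  qed
  have stk: "c k = t k * ratio"
  proof -
    have k': "1 \<le> k" "k \<le> r" using k by auto
    interpret Gk: group "product_group {k..r} Hs" using S.grp[OF k'(1)] .
    have Psyl: "subgroup P (product_group {k..r} Hs)" "P \<subseteq> Tker Hs H r k"
      "card P = 2 ^ multiplicity 2 (card (Tker Hs H r k))" using syl unfolding is_sylow_def by auto
    have gT: "proj_to k r g \<in> Tker Hs H r k"
    proof (cases "k < r")
      case True
      have "proj_to (Suc k) r (proj_to k r g) = proj_to (Suc k) r g" by (rule proj_to_proj) simp
      also have "\<dots> = \<one>\<^bsub>product_group {Suc k..r} Hs\<^esub>" using gk True by simp
      finally show ?thesis using giL True unfolding Tker_def by simp
    next
      case False then show ?thesis using giL unfolding Tker_def by simp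
    qed
    note ss = Gk.step_sylow[OF S.Lsub[OF k'(1)] S.Lfin S.Tsub[OF k'] Psyl gT gi2[OF k'(1)]]
    define a where "a = card (conjs (product_group {k..r} Hs) (Tker Hs H r k) (proj_to k r g) \<inter> P)"
    define b where "b = card (conjs (product_group {k..r} Hs) (Lproj H r k) (proj_to k r g) \<inter> P)"
    define cL where "cL = card (conjs (product_group {k..r} Hs) (Lproj H r k) (proj_to k r g))"
    define cT where "cT = card (conjs (product_group {k..r} Hs) (Tker Hs H r k) (proj_to k r g))"
    have a0: "a > 0" using ss(1) unfolding a_def .
    have e: "cL * a = cT * b" using ss(2) unfolding a_def b_def cL_def cT_def .
    have "real cL = real cT * real b / real a"
    proof -
      have "real cL * real a = real cT * real b" using e by (metis of_nat_mult)
      then show ?thesis using a0 by (simp add: field_simps)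
    qed
    then show ?thesis unfolding c_def t_def ratio_def a_def b_def cL_def cT_def by simp
  qed
  have main: "c (k - n) = (\<Prod>i=k-n..k. t i) * ratio" if "n < k" for n
    using that
  proof (induction n)
    case 0 then show ?case using stk by simp
  next
    case (Suc n)
    have e1: "k - n = Suc (k - Suc n)" using Suc.prems by simp
    have "c (k - Suc n) = t (k - Suc n) * c (k - n)"
      using st[of "k - Suc n"] Suc.prems e1 by simp
    also have "\<dots> = t (k - Suc n) * ((\<Prod>i=k-n..k. t i) * ratio)" using Suc by simp
    also have "\<dots> = (\<Prod>i=k - Suc n..k. t i) * ratio"
    proof -
      have "(\<Prod>i=k - Suc n..k. t i) = t (k - Suc n) * (\<Prod>i=Suc (k - Suc n)..k. t i)"
        by (rule prod.atLeast_Suc_atMost) simp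
      then show ?thesis using e1 by simp
    qed
    finally show ?case .
  qed
  have "c 1 = (\<Prod>i=1..k. t i) * ratio" using main[of "k - 1"] k by simp
  moreover have "(\<Prod>i=1..k. real (card (Tker Hs H r i))
        / real (card (centr (product_group {i..r} Hs) (Tker Hs H r i) (proj_to i r g)))) = (\<Prod>i=1..k. t i)"
    by (rule prod.cong[OF refl]) (rule tr)
  ultimately show ?thesis using lhs unfolding ratio_def by simp
qed


end
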